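(* $$\sum_{m,n=1}^\infty\frac{(-1)^n}{m^2\,n\,(m+n)^2}=\zeta(\overline{3},\overline{2})+\zeta(\overline{4},\overline{1})+\zeta(4,\overline{1})=\frac{107}{32}\zeta(5)-\frac{5}{16}\pi^2\zeta(3).$$
   Context: $\zeta$ denotes the Riemann zeta function. For positive integers $s,t$: $\zeta(\overline{s},\overline{t}):=\sum_{m>n\ge1}\frac{(-1)^{m+n}}{m^s n^t}$ and $\zeta(s,\overline{t}):=\sum_{m>n\ge1}\frac{(-1)^{n}}{m^s n^t}$. *)

theory Defs
  imports "HOL-Analysis.Analysis"
begin

text \<open>Riemann zeta function at an integer argument s (meaningful for s \<ge> 2).\<close>
definition zeta :: "nat \<Rightarrow> real" where
  "zeta s = (\<Sum>n. 1 / real (Suc n) ^ s)"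

definition zeta_bb :: "nat \<Rightarrow> nat \<Rightarrow> real" where
  "zeta_bb s t = (\<Sum>\<^sub>\<infinity>(m,n)\<in>{(m,n). m > n \<and> n \<ge> (1::nat)}.
       (-1) ^ (m + n) / (real m ^ s * real n ^ t))"

definition zeta_nb :: "nat \<Rightarrow> nat \<Rightarrow> real" where
  "zeta_nb s t = (\<Sum>\<^sub>\<infinity>(m,n)\<in>{(m,n). m > n \<and> n \<ge> (1::nat)}.
       (-1) ^ n / (real m ^ s * real n ^ t))"

end

theory Submission
  imports Defs
begin


definition PP :: "(nat \<times> nat) set" where "PP = {(m,n). m > n \<and> n \<ge> (1::nat)}"
definition pm :: "real \<Rightarrow> bool" where "pm s \<longleftrightarrow> s = 1 \<or> s = -1"
definition Z :: "nat \<Rightarrow> real \<Rightarrow> nat \<Rightarrow> real \<Rightarrow> real" where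
  "Z a s b t = (\<Sum>\<^sub>\<infinity>(m,n)\<in>PP. s^m * t^n / (real m ^ a * real n ^ b))"
definition Z1 :: "nat \<Rightarrow> real \<Rightarrow> real" where
  "Z1 k s = (\<Sum>\<^sub>\<infinity>n\<in>{1..}. s^n / real n ^ k)"

lemma pm_abs: "pm s \<Longrightarrow> \<bar>s ^ n\<bar> = 1"
  by (auto simp: pm_def power_abs)
lemma pm_sq: "pm s \<Longrightarrow> s * s = 1"
  by (auto simp: pm_def)
lemma pm_pow_sq: "pm s \<Longrightarrow> s ^ n * s ^ n = 1"
  by (metis pm_sq power_mult_distrib power_one)
lemma pm_mult: "pm s \<Longrightarrow> pm t \<Longrightarrow> pm (s * t)"
  by (auto simp: pm_def)
lemma pm_1[simp]: "pm 1" and pm_m1[simp]: "pm (-1)" by (auto simp: pm_def)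

lemma zeta_bb_Z: "zeta_bb a b = Z a (-1) b (-1)"
  unfolding zeta_bb_def Z_def PP_def
  by (intro infsum_cong) (auto simp: power_add)
lemma zeta_nb_Z: "zeta_nb a b = Z a 1 b (-1)"
  unfolding zeta_nb_def Z_def PP_def
  by (intro infsum_cong) auto

lemma powr_summable_on: "(\<lambda>n::nat. real n powr (-3/2)) summable_on UNIV"
proof -
  have "summable (\<lambda>n::nat. real n powr (-3/2))"
    by (subst summable_real_powr_iff) simp
  then show ?thesis by (intro summable_nonneg_imp_summable_on) auto
qed

lemma has_sum_product:
  fixes f g :: "nat \<Rightarrow> real"
  assumes f: "f summable_on A" and g: "g summable_on B"
  shows "((\<lambda>(x,y). f x * g y) has_sum (infsum f A * infsum g B)) (A \<times> B)"
proof -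
  have fa: "(\<lambda>x. norm (f x)) summable_on A" and ga: "(\<lambda>x. norm (g x)) summable_on B"
    using f g summable_on_iff_abs_summable_on_real by blast+
  have inner: "(\<lambda>y. norm (f x * g y)) summable_on B" for x
    using summable_on_cmult_right[OF ga, of "norm (f x)"] by (simp add: abs_mult)
  have eq: "(\<lambda>x. \<bar>\<Sum>\<^sub>\<infinity>y\<in>B. \<bar>f x\<bar> * \<bar>g y\<bar>\<bar>) = (\<lambda>x. \<bar>f x\<bar> * \<bar>\<Sum>\<^sub>\<infinity>y\<in>B. \<bar>g y\<bar>\<bar>)"
    by (simp add: infsum_cmult_right' abs_mult)
  have s2: "(\<lambda>x. \<bar>f x\<bar> * \<bar>\<Sum>\<^sub>\<infinity>y\<in>B. \<bar>g y\<bar>\<bar>) summable_on A"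
    using summable_on_cmult_left[OF fa, of "\<bar>\<Sum>\<^sub>\<infinity>y\<in>B. \<bar>g y\<bar>\<bar>"] by simp
  have sAB: "(\<lambda>p. norm ((\<lambda>(x,y). f x * g y) p)) summable_on (A \<times> B)"
    using inner s2 eq Infinite_Sum.abs_summable_on_Sigma_iff[where f="\<lambda>(x,y). f x * g y" and A=A and B="\<lambda>_. B"]
    by (simp del: real_norm_def) (simp add: abs_mult)
  hence sAB': "(\<lambda>(x,y). f x * g y) summable_on (A \<times> B)"
    using summable_on_iff_abs_summable_on_real by blast
  have "infsum (\<lambda>(x,y). f x * g y) (A \<times> B) = infsum (\<lambda>x. infsum (\<lambda>y. f x * g y) B) A"
    using infsum_Sigma_banach[OF sAB'] by simp
  also have "\<dots> = infsum (\<lambda>x. f x * infsum g B) A"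
    by (simp add: infsum_cmult_right')
  also have "\<dots> = infsum f A * infsum g B"
    by (simp add: infsum_cmult_left')
  finally show ?thesis using sAB' by (metis has_sum_infsum)
qed



lemma powr32: "x > 0 \<Longrightarrow> (x::real) powr (-3/2) = 1 / (x * sqrt x)"
proof -
  assume x: "x > 0"
  have "x powr (3/2) = x powr 1 * x powr (1/2)" using x by (subst powr_add[symmetric]) simp
  also have "\<dots> = x * sqrt x" using x by (simp add: powr_half_sqrt)
  finally show ?thesis using x by (simp add: powr_minus_divide)
qed

lemma bnd:
  assumes "1 \<le> n" "n < m" "2 \<le> a" "1 \<le> b"
  shows "1/(real m^a * real n^b) \<le> real m powr (-3/2) * real n powr (-3/2)"
proof -
  have m: "real m \<ge> 1" "real n \<ge> 1" using assms by auto
  have "real m ^ 2 * real n \<le> real m^a * real n^b"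
    using m assms by (intro mult_mono power_increasing) (auto simp: power_increasing[of 1 b "real n", simplified])
  hence "1/(real m^a * real n^b) \<le> 1/(real m ^ 2 * real n)"
    using m by (intro divide_left_mono) auto
  also have "real m * sqrt (real m) * (real n * sqrt (real n)) \<le> real m ^ 2 * real n"
  proof -
    have "sqrt (real n) \<le> sqrt (real m)" using assms by auto
    moreover have "sqrt (real m) * sqrt (real m) = real m" by simp
    ultimately have "sqrt (real m) * sqrt (real n) \<le> real m"
      by (metis mult_left_mono real_sqrt_ge_zero of_nat_0_le_iff)
    hence "real m * real n * (sqrt (real m) * sqrt (real n)) \<le> real m * real n * real m"
      using m by (intro mult_left_mono) auto
    thus ?thesis by (simp add: power2_eq_square algebra_simps)
  qed
  hence "1/(real m ^ 2 * real n) \<le> 1/(real m * sqrt (real m) * (real n * sqrt (real n)))"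
    using m by (intro divide_left_mono) auto
  also have "\<dots> = real m powr (-3/2) * real n powr (-3/2)"
    using m powr32[of "real m"] powr32[of "real n"] by simp
  finally show ?thesis .
qed

lemma dom_summable: "(\<lambda>(m,n). real m powr (-3/2) * real n powr (-3/2)) summable_on A"
proof -
  have "(\<lambda>(m,n). real m powr (-3/2) * real n powr (-3/2)) summable_on (UNIV \<times> UNIV)"
    using has_sum_product[OF powr_summable_on powr_summable_on] summable_on_def by blast
  thus ?thesis by (rule summable_on_subset) auto
qed

lemma summable_Z:
  assumes "2 \<le> a" "1 \<le> b" "pm s" "pm t"
  shows "(\<lambda>(m,n). s^m * t^n / (real m ^ a * real n ^ b)) summable_on PP"
proof -
  have "(\<lambda>p. norm ((\<lambda>(m,n). s^m * t^n / (real m ^ a * real n ^ b)) p)) summable_on PP"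
  proof (rule summable_on_comparison_test[OF dom_summable])
    fix p assume "p \<in> PP"
    then obtain m n where p: "p = (m,n)" "1 \<le> n" "n < m" by (auto simp: PP_def)
    have "norm (s^m * t^n / (real m ^ a * real n ^ b)) = 1/(real m^a * real n^b)"
      using assms by (simp add: abs_mult pm_abs)
    thus "norm ((\<lambda>(m,n). s^m * t^n / (real m ^ a * real n ^ b)) p) \<le> (\<lambda>(m,n). real m powr (-3/2) * real n powr (-3/2)) p"
      using bnd[OF p(2,3) assms(1,2)] p by simp
  qed auto
  thus ?thesis using summable_on_iff_abs_summable_on_real by blast
qed

lemma has_Z:
  assumes "2 \<le> a" "1 \<le> b" "pm s" "pm t"
  shows "((\<lambda>(m,n). s^m * t^n / (real m ^ a * real n ^ b)) has_sum Z a s b t) PP"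
  using summable_Z[OF assms] unfolding Z_def by (rule has_sum_infsum)



lemma has_sum_extend0:
  fixes f :: "'a \<Rightarrow> real"
  assumes "(f has_sum x) T" "T \<subseteq> S" "\<And>y. y \<in> S - T \<Longrightarrow> f y = 0"
  shows "(f has_sum x) S"
  using assms has_sum_cong_neutral[of T S f f x] by blast

lemma summable_Z1:
  assumes "2 \<le> k" "pm s"
  shows "(\<lambda>n. s^n / real n ^ k) summable_on {1..}"
proof -
  have "(\<lambda>n. norm (s^n / real n ^ k)) summable_on {1..}"
  proof (rule summable_on_comparison_test[of "\<lambda>n. real n powr (-3/2)"])
    show "(\<lambda>n. real n powr (-3/2)) summable_on {1..}"
      using powr_summable_on by (rule summable_on_subset) auto
    fix n :: nat assume n: "n \<in> {1..}"
    hence n1: "real n \<ge> 1" by auto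
    have "norm (s^n / real n ^ k) = 1 / real n ^ k" using assms by (simp add: pm_abs)
    also have "real n * sqrt (real n) \<le> real n ^ k"
    proof -
      have "sqrt (real n) * 1 \<le> sqrt (real n) * sqrt (real n)" using n1 by (intro mult_left_mono) auto
      hence "sqrt (real n) \<le> real n" by simp
      hence "real n * sqrt (real n) \<le> real n ^ 2" using n1 by (simp add: power2_eq_square mult_left_mono)
      also have "\<dots> \<le> real n ^ k" using n1 assms by (intro power_increasing) auto
      finally show ?thesis .
    qed
    hence "1 / real n ^ k \<le> 1 / (real n * sqrt (real n))" using n1 by (intro divide_left_mono) auto
    also have "\<dots> = real n powr (-3/2)" using n1 powr32[of "real n"] by simp
    finally show "norm (s^n / real n ^ k) \<le> real n powr (-3/2)" .
  qed auto
  thus ?thesis using summable_on_iff_abs_summable_on_real by blast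
qed

lemma has_Z1:
  assumes "2 \<le> k" "pm s"
  shows "((\<lambda>n. s^n / real n ^ k) has_sum Z1 k s) {1..}"
  using summable_Z1[OF assms] unfolding Z1_def by (rule has_sum_infsum)

lemma Z1_zeta:
  assumes "2 \<le> k"
  shows "Z1 k 1 = zeta k"
proof -
  have "((\<lambda>n. 1 / real n ^ k) has_sum Z1 k 1) {1..}" using has_Z1[OF assms pm_1] by simp
  hence "((\<lambda>n. 1 / real (Suc n) ^ k) has_sum Z1 k 1) UNIV"
    by (rule has_sum_reindex_bij_witness[where i=Suc and j="\<lambda>n. n - 1", THEN iffD1, rotated -1]) auto
  hence "(\<lambda>n. 1 / real (Suc n) ^ k) sums Z1 k 1" by (rule has_sum_imp_sums)
  thus ?thesis unfolding zeta_def by (simp add: sums_iff)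
qed

lemma Z1_dist:
  assumes "2 \<le> k"
  shows "Z1 k 1 + Z1 k (-1) = 2 / 2^k * Z1 k 1"
proof -
  have h: "((\<lambda>n. 1^n / real n ^ k + (-1)^n / real n ^ k) has_sum (Z1 k 1 + Z1 k (-1))) {1..}"
    by (intro has_sum_add has_Z1 assms) auto
  have "((\<lambda>n. 2 / 2^k * (1 / real n ^ k)) has_sum (2 / 2^k * Z1 k 1)) {1..}"
    using has_sum_cmult_right[OF has_Z1[OF assms pm_1], of "2 / 2^k"] by simp
  hence "((\<lambda>n. 1^n / real n ^ k + (-1)^n / real n ^ k) has_sum (2 / 2^k * Z1 k 1)) {n. even n \<and> n \<ge> 1}"
  proof (rule has_sum_reindex_bij_witness[where i="\<lambda>n. n div 2" and j="\<lambda>n. 2*n", THEN iffD1, rotated -1])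
    fix n :: nat assume "n \<in> {1..}"
    thus "1 ^ (2*n) / real (2*n) ^ k + (-1) ^ (2*n) / real (2*n) ^ k = 2 / 2^k * (1 / real n ^ k)"
      by (simp add: power_mult_distrib)
  qed auto
  hence "((\<lambda>n. 1^n / real n ^ k + (-1)^n / real n ^ k) has_sum (2 / 2^k * Z1 k 1)) {1..}"
    by (rule has_sum_extend0) auto
  thus ?thesis using h has_sum_unique by blast
qed



lemma id_shuf:
  fixes x y w :: real assumes "x > 0" "y > 0" "w = x + y"
  shows "1/(x^2*y^3) = 1/(w^2*y^3) + 2/(w^3*y^2) + 3/(w^4*y) + 1/(w^3*x^2) + 3/(w^4*x)"
proof -
  have w: "w > 0" using assms by simp
  have e: "w^4 = w^2*x^2 + 2*w*x^2*y + 3*x^2*y^2 + w*y^3 + 3*x*y^3"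
    unfolding assms(3) by (simp add: algebra_simps power2_eq_square power3_eq_cube power4_eq_xxxx)
  have "1/(x^2*y^3) = w^4/(w^4*(x^2*y^3))" using assms(1,2) w by simp
  also have "\<dots> = (w^2*x^2 + 2*w*x^2*y + 3*x^2*y^2 + w*y^3 + 3*x*y^3)/(w^4*(x^2*y^3))" using e by simp
  also have "\<dots> = (w^2*x^2)/(w^4*(x^2*y^3)) + (2*w*x^2*y)/(w^4*(x^2*y^3)) + (3*x^2*y^2)/(w^4*(x^2*y^3)) + (w*y^3)/(w^4*(x^2*y^3)) + (3*x*y^3)/(w^4*(x^2*y^3))"
    by (simp add: add_divide_distrib)
  also have "\<dots> = 1/(w^2*y^3) + 2/(w^3*y^2) + 3/(w^4*y) + 1/(w^3*x^2) + 3/(w^4*x)"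
    using assms(1,2) w by (simp add: field_simps power2_eq_square power3_eq_cube power4_eq_xxxx)
  finally show ?thesis .
qed

lemma id_sum:
  fixes x y w :: real assumes "x > 0" "y > 0" "w = x + y"
  shows "1/(x*w*y^3) = 1/(w^2*y^3) + 1/(w^3*y^2) + 1/(w^4*y) + 1/(w^4*x)"
proof -
  have w: "w > 0" using assms by simp
  have e: "w^3 = w^2*x + w*x*y + x*y^2 + y^3"
    unfolding assms(3) by (simp add: algebra_simps power2_eq_square power3_eq_cube)
  have "1/(x*w*y^3) = w^3/(w^3*(x*w*y^3))" using assms(1,2) w by simp
  also have "\<dots> = (w^2*x + w*x*y + x*y^2 + y^3)/(w^3*(x*w*y^3))" using e by simp
  also have "\<dots> = (w^2*x)/(w^3*(x*w*y^3)) + (w*x*y)/(w^3*(x*w*y^3)) + (x*y^2)/(w^3*(x*w*y^3)) + (y^3)/(w^3*(x*w*y^3))"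
    by (simp add: add_divide_distrib)
  also have "\<dots> = 1/(w^2*y^3) + 1/(w^3*y^2) + 1/(w^4*y) + 1/(w^4*x)"
    using assms(1,2) w by (simp add: field_simps power2_eq_square power3_eq_cube power4_eq_xxxx)
  finally show ?thesis .
qed

lemma id_first:
  fixes k n M :: real assumes "k > 0" "n > 0" "M = k + n"
  shows "1/(k^2*n*M^2) = 1/(M^4*n) + 1/(M^4*k) + 1/(M^3*k^2)"
proof -
  have w: "M > 0" using assms by simp
  have e: "M^2 = k^2 + k*n + M*n"
    unfolding assms(3) by (simp add: algebra_simps power2_eq_square)
  have "1/(k^2*n*M^2) = M^2/(M^2*(k^2*n*M^2))" using assms(1,2) w by simp
  also have "\<dots> = (k^2 + k*n + M*n)/(M^2*(k^2*n*M^2))" using e by simp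
  also have "\<dots> = k^2/(M^2*(k^2*n*M^2)) + (k*n)/(M^2*(k^2*n*M^2)) + (M*n)/(M^2*(k^2*n*M^2))"
    by (simp add: add_divide_distrib)
  also have "\<dots> = 1/(M^4*n) + 1/(M^4*k) + 1/(M^3*k^2)"
    using assms(1,2) w by (simp add: field_simps power2_eq_square power3_eq_cube power4_eq_xxxx)
  finally show ?thesis .
qed



lemma reindexA:
  "((\<lambda>(m,n). G (m+n) n) has_sum X) ({1..} \<times> {1..}) \<longleftrightarrow> ((\<lambda>(M,n). G M n) has_sum X) PP"
  by (rule has_sum_reindex_bij_witness[where j="\<lambda>(m,n). (m+n,n)" and i="\<lambda>(M,n). (M-n,n)"])
     (auto simp: PP_def)

lemma reindexB:
  "((\<lambda>(m,n). G (m+n) m) has_sum X) ({1..} \<times> {1..}) \<longleftrightarrow> ((\<lambda>(M,n). G M n) has_sum X) PP"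
  by (rule has_sum_reindex_bij_witness[where j="\<lambda>(m,n). (m+n,m)" and i="\<lambda>(M,k). (k,M-k)"])
     (auto simp: PP_def)

lemma hasA:
  assumes "2 \<le> a" "1 \<le> b" "pm s" "pm u"
  shows "((\<lambda>(m,n). s^(m+n) * u^n / (real (m+n) ^ a * real n ^ b)) has_sum Z a s b u) ({1..} \<times> {1..})"
  using has_Z[OF assms] reindexA[where G="\<lambda>M n. s^M * u^n / (real M ^ a * real n ^ b)"] by simp

lemma hasB:
  assumes "2 \<le> a" "1 \<le> b" "pm s" "pm u"
  shows "((\<lambda>(m,n). s^(m+n) * u^m / (real (m+n) ^ a * real m ^ b)) has_sum Z a s b u) ({1..} \<times> {1..})"
  using has_Z[OF assms] reindexB[where G="\<lambda>M n. s^M * u^n / (real M ^ a * real n ^ b)"] by simp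

lemma has_Z1prod:
  assumes "2 \<le> a" "2 \<le> b" "pm s" "pm t"
  shows "((\<lambda>(m,n). s^m / real m ^ a * (t^n / real n ^ b)) has_sum (Z1 a s * Z1 b t)) ({1..} \<times> {1..})"
  using has_sum_product[OF summable_Z1[OF assms(1,3)] summable_Z1[OF assms(2,4)]]
  unfolding Z1_def by simp



lemma sgA: "pm s \<Longrightarrow> s^(m+n) * (s*t)^n = s^m * t^n"
proof -
  assume "pm s"
  hence "s^n * s^n = 1" by (rule pm_pow_sq)
  hence "s^m * t^n * (s^n * s^n) = s^m * t^n" by simp
  thus ?thesis by (simp add: power_add power_mult_distrib algebra_simps)
qed

lemma sgB: "pm t \<Longrightarrow> t^(m+n) * (s*t)^m = s^m * t^n"
proof -
  assume "pm t"
  hence "t^m * t^m = 1" by (rule pm_pow_sq)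
  hence "s^m * t^n * (t^m * t^m) = s^m * t^n" by simp
  thus ?thesis by (simp add: power_add power_mult_distrib algebra_simps)
qed

lemma shuf_pt:
  assumes "pm s" "pm t" "1 \<le> m" "1 \<le> n"
  shows "s^m / real m ^ 2 * (t^n / real n ^ 3) =
    s^(m+n) * (s*t)^n / (real (m+n) ^ 2 * real n ^ 3) + 2 * (s^(m+n) * (s*t)^n / (real (m+n) ^ 3 * real n ^ 2))
    + 3 * (s^(m+n) * (s*t)^n / (real (m+n) ^ 4 * real n ^ 1))
    + t^(m+n) * (s*t)^m / (real (m+n) ^ 3 * real m ^ 2) + 3 * (t^(m+n) * (s*t)^m / (real (m+n) ^ 4 * real m ^ 1))"
proof -
  define c where "c = s^m * t^n"
  have e: "1/(real m^2*real n^3) = 1/(real (m+n)^2*real n^3) + 2/(real (m+n)^3*real n^2) + 3/(real (m+n)^4*real n) + 1/(real (m+n)^3*real m^2) + 3/(real (m+n)^4*real m)"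
    using id_shuf[of "real m" "real n" "real (m+n)"] assms by simp
  have "s^m / real m ^ 2 * (t^n / real n ^ 3) = c * (1/(real m^2*real n^3))" by (simp add: c_def)
  also note e
  finally show ?thesis unfolding sgA[OF assms(1)] sgB[OF assms(2)] c_def[symmetric]
    by (simp add: distrib_left ac_simps)
qed

lemma shuffle:
  assumes "pm s" "pm t"
  shows "Z1 2 s * Z1 3 t = Z 2 s 3 (s*t) + 2 * Z 3 s 2 (s*t) + 3 * Z 4 s 1 (s*t) + Z 3 t 2 (s*t) + 3 * Z 4 t 1 (s*t)"
proof -
  have u: "pm (s*t)" using assms by (rule pm_mult)
  have h: "((\<lambda>p. (case p of (m,n) \<Rightarrow> s^(m+n) * (s*t)^n / (real (m+n) ^ 2 * real n ^ 3))
      + 2 * (case p of (m,n) \<Rightarrow> s^(m+n) * (s*t)^n / (real (m+n) ^ 3 * real n ^ 2))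
      + 3 * (case p of (m,n) \<Rightarrow> s^(m+n) * (s*t)^n / (real (m+n) ^ 4 * real n ^ 1))
      + (case p of (m,n) \<Rightarrow> t^(m+n) * (s*t)^m / (real (m+n) ^ 3 * real m ^ 2))
      + 3 * (case p of (m,n) \<Rightarrow> t^(m+n) * (s*t)^m / (real (m+n) ^ 4 * real m ^ 1)))
     has_sum (Z 2 s 3 (s*t) + 2 * Z 3 s 2 (s*t) + 3 * Z 4 s 1 (s*t) + Z 3 t 2 (s*t) + 3 * Z 4 t 1 (s*t))) ({1..} \<times> {1..})"
    by (intro has_sum_add has_sum_cmult_right hasA hasB assms u) auto
  have "((\<lambda>(m,n). s^m / real m ^ 2 * (t^n / real n ^ 3))
     has_sum (Z 2 s 3 (s*t) + 2 * Z 3 s 2 (s*t) + 3 * Z 4 s 1 (s*t) + Z 3 t 2 (s*t) + 3 * Z 4 t 1 (s*t))) ({1..} \<times> {1..})"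
    using h
  proof (rule has_sum_cong[THEN iffD1, rotated])
    fix p :: "nat \<times> nat" assume "p \<in> {1..} \<times> {1..}"
    then obtain m n where p: "p = (m,n)" "1 \<le> m" "1 \<le> n" by auto
    show "(\<lambda>p. (case p of (m,n) \<Rightarrow> s^(m+n) * (s*t)^n / (real (m+n) ^ 2 * real n ^ 3))
      + 2 * (case p of (m,n) \<Rightarrow> s^(m+n) * (s*t)^n / (real (m+n) ^ 3 * real n ^ 2))
      + 3 * (case p of (m,n) \<Rightarrow> s^(m+n) * (s*t)^n / (real (m+n) ^ 4 * real n ^ 1))
      + (case p of (m,n) \<Rightarrow> t^(m+n) * (s*t)^m / (real (m+n) ^ 3 * real m ^ 2))
      + 3 * (case p of (m,n) \<Rightarrow> t^(m+n) * (s*t)^m / (real (m+n) ^ 4 * real m ^ 1))) p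
      = (\<lambda>(m,n). s^m / real m ^ 2 * (t^n / real n ^ 3)) p"
      unfolding p prod.case by (rule shuf_pt[OF assms p(2,3), symmetric])
  qed
  moreover have "((\<lambda>(m,n). s^m / real m ^ 2 * (t^n / real n ^ 3)) has_sum (Z1 2 s * Z1 3 t)) ({1..} \<times> {1..})"
    by (rule has_Z1prod[OF _ _ assms]) auto
  ultimately show ?thesis by (rule has_sum_unique[symmetric])
qed



lemma stuffle:
  assumes "2 \<le> a" "2 \<le> b" "pm s" "pm t"
  shows "Z1 a s * Z1 b t = Z a s b t + Z b t a s + Z1 (a+b) (s*t)"
proof -
  define F where "F = (\<lambda>(m,n). s^m / real m ^ a * (t^n / real n ^ b))"
  have h0: "(F has_sum (Z1 a s * Z1 b t)) ({1..} \<times> {1..})"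
    unfolding F_def by (rule has_Z1prod[OF assms])
  have h1: "(F has_sum Z a s b t) PP"
    using has_Z[OF assms(1) _ assms(3,4), of b] assms(2)
    by (rule_tac has_sum_cong[THEN iffD1, rotated]) (auto simp: F_def)
  have h2: "(F has_sum Z b t a s) {(m,n). m < n \<and> 1 \<le> m}"
    using has_Z[OF assms(2) _ assms(4,3), of a] assms(1)
    by (rule_tac has_sum_reindex_bij_witness[where j="\<lambda>(m,n). (n,m)" and i="\<lambda>(m,n). (n,m)", THEN iffD1])
       (auto simp: F_def PP_def ac_simps)
  have h3: "(F has_sum Z1 (a+b) (s*t)) {(n,n) | n. 1 \<le> n}"
    using has_Z1[of "a+b" "s*t"] assms pm_mult
    by (rule_tac has_sum_reindex_bij_witness[where j="\<lambda>n. (n,n)" and i="fst", THEN iffD1])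
       (auto simp: F_def power_add power_mult_distrib)
  have "(F has_sum (Z a s b t + Z b t a s + Z1 (a+b) (s*t))) (PP \<union> {(m,n). m < n \<and> 1 \<le> m} \<union> {(n,n) | n. 1 \<le> n})"
    by (intro has_sum_Un_disjoint h1 h2 h3) (auto simp: PP_def)
  moreover have "PP \<union> {(m,n). m < n \<and> 1 \<le> m} \<union> {(n,n) | n. 1 \<le> n} = {1..} \<times> {1..}"
    by (auto simp: PP_def)
  ultimately show ?thesis using h0 has_sum_unique by metis
qed

lemma dist_pair:
  "Z 2 1 3 1 + Z 2 1 3 (-1) + Z 2 (-1) 3 1 + Z 2 (-1) 3 (-1) = Z 2 1 3 1 / 8"
proof -
  define F where "F = (\<lambda>(m::nat,n::nat). (if even m \<and> even n then 4 else 0) / (real m ^ 2 * real n ^ 3))"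
  have h: "((\<lambda>p. (case p of (m,n) \<Rightarrow> 1^m * 1^n / (real m ^ 2 * real n ^ 3))
         + (case p of (m,n) \<Rightarrow> 1^m * (-1)^n / (real m ^ 2 * real n ^ 3))
         + (case p of (m,n) \<Rightarrow> (-1)^m * 1^n / (real m ^ 2 * real n ^ 3))
         + (case p of (m,n) \<Rightarrow> (-1)^m * (-1)^n / (real m ^ 2 * real n ^ 3)))
      has_sum (Z 2 1 3 1 + Z 2 1 3 (-1) + Z 2 (-1) 3 1 + Z 2 (-1) 3 (-1))) PP"
    by (intro has_sum_add has_Z) auto
  have hF: "(F has_sum (Z 2 1 3 1 + Z 2 1 3 (-1) + Z 2 (-1) 3 1 + Z 2 (-1) 3 (-1))) PP"
    using h
  proof (rule has_sum_cong[THEN iffD1, rotated])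
    fix p :: "nat \<times> nat" assume "p \<in> PP"
    then obtain m n where p: "p = (m,n)" by (cases p) auto
    show "(\<lambda>p. (case p of (m,n) \<Rightarrow> 1^m * 1^n / (real m ^ 2 * real n ^ 3))
         + (case p of (m,n) \<Rightarrow> 1^m * (-1)^n / (real m ^ 2 * real n ^ 3))
         + (case p of (m,n) \<Rightarrow> (-1)^m * 1^n / (real m ^ 2 * real n ^ 3))
         + (case p of (m,n) \<Rightarrow> (-1)^m * (-1)^n / (real m ^ 2 * real n ^ 3))) p = F p"
      unfolding p F_def prod.case
      by (cases "even m"; cases "even n") (simp_all add: add_divide_distrib[symmetric])
  qed
  have "((\<lambda>p. 1/8 * (case p of (m,n) \<Rightarrow> 1^m * 1^n / (real m ^ 2 * real n ^ 3))) has_sum (1/8 * Z 2 1 3 1)) PP"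
    by (intro has_sum_cmult_right has_Z) auto
  hence "(F has_sum (1/8 * Z 2 1 3 1)) {(m,n). (m,n) \<in> PP \<and> even m \<and> even n}"
    by (rule has_sum_reindex_bij_witness[where j="\<lambda>(m,n). (2*m,2*n)" and i="\<lambda>(m,n). (m div 2, n div 2)", THEN iffD1, rotated -1])
       (auto simp: PP_def F_def power_mult_distrib)
  hence "(F has_sum (1/8 * Z 2 1 3 1)) PP"
    by (rule has_sum_extend0) (auto simp: F_def split: if_splits)
  with hF show ?thesis using has_sum_unique by fastforce
qed



definition H :: "nat \<Rightarrow> real" where "H n = (\<Sum>k<n. 1 / real (Suc k))"

lemma inner_sum:
  assumes n: "1 \<le> n"
  shows "((\<lambda>m. 1 / (real m * real (m+n))) has_sum (H n / real n)) {1..}"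
proof -
  have tel: "(\<lambda>j. 1 / real (j + (1+i)) - 1 / real (Suc j + (1+i))) sums (1 / real (1+i))" for i
  proof -
    have "(\<lambda>j. 1 / real (j + (1+i))) \<longlonglongrightarrow> 0"
      using LIMSEQ_ignore_initial_segment[OF lim_inverse_n', of "1+i"] by simp
    from telescope_sums'[OF this] show ?thesis by simp
  qed
  have "(\<lambda>j. \<Sum>i<n. 1 / real (j + (1+i)) - 1 / real (Suc j + (1+i))) sums (\<Sum>i<n. 1 / real (1+i))"
    by (rule sums_sum) (rule tel)
  moreover have "(\<Sum>i<n. 1 / real (j + (1+i)) - 1 / real (Suc j + (1+i))) = 1 / real (Suc j) - 1 / real (Suc j + n)" for j
    using sum_lessThan_telescope'[of "\<lambda>i. 1 / real (j + (1+i))" n] by simp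
  ultimately have "(\<lambda>j. 1 / real (Suc j) - 1 / real (Suc j + n)) sums H n"
    by (simp add: H_def)
  hence "(\<lambda>j. (1 / real (Suc j) - 1 / real (Suc j + n)) / real n) sums (H n / real n)"
    by (rule sums_divide)
  moreover have "(1 / real (Suc j) - 1 / real (Suc j + n)) / real n = 1 / (real (Suc j) * real (Suc j + n))" for j
  proof -
    define a where "a = real (Suc j)"
    have a: "a > 0" "real (Suc j + n) = a + real n" by (auto simp: a_def)
    have "1 / a - 1 / (a + real n) = real n / (a * (a + real n))"
      using a n by (simp add: field_simps)
    thus ?thesis using n unfolding a_def[symmetric] a(2) by simp
  qed
  ultimately have "(\<lambda>j. 1 / (real (Suc j) * real (Suc j + n))) sums (H n / real n)" by simp
  hence "((\<lambda>j. 1 / (real (Suc j) * real (Suc j + n))) has_sum (H n / real n)) UNIV"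
    by (rule sums_nonneg_imp_has_sum) simp
  thus ?thesis
    by (rule has_sum_reindex_bij_witness[where i="\<lambda>m. m - 1" and j=Suc, THEN iffD1, rotated -1]) auto
qed

lemma sgC: "pm t \<Longrightarrow> t^(m+n) * t^m = t^n"
proof -
  assume "pm t"
  hence "t^m * t^m = 1" by (rule pm_pow_sq)
  hence "t^n * (t^m * t^m) = t^n" by simp
  thus ?thesis by (simp add: power_add algebra_simps)
qed

lemma sum_pt:
  assumes "pm t" "1 \<le> m" "1 \<le> n"
  shows "t^n / (real m * real (m+n) * real n ^ 3) =
    1^(m+n) * t^n / (real (m+n) ^ 2 * real n ^ 3) + 1^(m+n) * t^n / (real (m+n) ^ 3 * real n ^ 2)
    + 1^(m+n) * t^n / (real (m+n) ^ 4 * real n ^ 1) + t^(m+n) * t^m / (real (m+n) ^ 4 * real m ^ 1)"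
proof -
  define c where "c = t^n"
  have e: "1/(real m*real (m+n)*real n^3) = 1/(real (m+n)^2*real n^3) + 1/(real (m+n)^3*real n^2) + 1/(real (m+n)^4*real n) + 1/(real (m+n)^4*real m)"
    using id_sum[of "real m" "real n" "real (m+n)"] assms by simp
  have "t^n / (real m * real (m+n) * real n ^ 3) = c * (1/(real m*real (m+n)*real n^3))" by (simp add: c_def)
  also note e
  finally show ?thesis unfolding sgC[OF assms(1)] c_def[symmetric] power_one mult_1
    by (simp add: distrib_left)
qed

lemma sum_rel:
  assumes t: "pm t"
  shows "Z 2 1 3 t + Z 3 1 2 t + Z 4 1 1 t + Z 4 t 1 t = Z 4 t 1 1 + Z1 5 t"
proof -
  define G where "G = (\<lambda>(m,n). t^n / (real m * real (m+n) * real n ^ 3))"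
  define V where "V = Z 2 1 3 t + Z 3 1 2 t + Z 4 1 1 t + Z 4 t 1 t"
  have h: "((\<lambda>p. (case p of (m,n) \<Rightarrow> 1^(m+n) * t^n / (real (m+n) ^ 2 * real n ^ 3))
      + (case p of (m,n) \<Rightarrow> 1^(m+n) * t^n / (real (m+n) ^ 3 * real n ^ 2))
      + (case p of (m,n) \<Rightarrow> 1^(m+n) * t^n / (real (m+n) ^ 4 * real n ^ 1))
      + (case p of (m,n) \<Rightarrow> t^(m+n) * t^m / (real (m+n) ^ 4 * real m ^ 1)))
     has_sum V) ({1..} \<times> {1..})"
    unfolding V_def by (intro has_sum_add hasA hasB t) auto
  have hG: "(G has_sum V) ({1..} \<times> {1..})"
    using h
  proof (rule has_sum_cong[THEN iffD1, rotated])
    fix p :: "nat \<times> nat" assume "p \<in> {1..} \<times> {1..}"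
    then obtain m n where p: "p = (m,n)" "1 \<le> m" "1 \<le> n" by auto
    show "(\<lambda>p. (case p of (m,n) \<Rightarrow> 1^(m+n) * t^n / (real (m+n) ^ 2 * real n ^ 3))
      + (case p of (m,n) \<Rightarrow> 1^(m+n) * t^n / (real (m+n) ^ 3 * real n ^ 2))
      + (case p of (m,n) \<Rightarrow> 1^(m+n) * t^n / (real (m+n) ^ 4 * real n ^ 1))
      + (case p of (m,n) \<Rightarrow> t^(m+n) * t^m / (real (m+n) ^ 4 * real m ^ 1))) p = G p"
      unfolding p G_def prod.case by (rule sum_pt[OF t p(2,3), symmetric])
  qed
  have hG': "((\<lambda>(n,m). G (m,n)) has_sum V) ({1..} \<times> {1..})"
    using hG by (rule has_sum_reindex_bij_witness[where j="\<lambda>(m,n). (n,m)" and i="\<lambda>(m,n). (n,m)", THEN iffD1, rotated -1]) auto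
  have inner: "((\<lambda>m. (\<lambda>(n,m). G (m,n)) (n,m)) has_sum (t^n / real n ^ 3 * (H n / real n))) {1..}"
    if n: "n \<in> {1..}" for n
  proof -
    have "((\<lambda>m. t^n / real n ^ 3 * (1 / (real m * real (m+n)))) has_sum (t^n / real n ^ 3 * (H n / real n))) {1..}"
      using n by (intro has_sum_cmult_right inner_sum) auto
    thus ?thesis by (rule has_sum_cong[THEN iffD1, rotated]) (simp add: G_def)
  qed
  have A1: "((\<lambda>n. t^n / real n ^ 3 * (H n / real n)) has_sum V) {1..}"
    using has_sum_Sigma'[OF hG' inner] .
  define f where "f = (\<lambda>(M::nat,k::nat). t^M / (real M ^ 4 * real k))"
  have f1: "(f has_sum Z 4 t 1 1) PP"
    using has_Z[of 4 1 t 1] t by (rule_tac has_sum_cong[THEN iffD1, rotated]) (auto simp: f_def)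
  have f2: "(f has_sum Z1 5 t) {(n,n) | n. 1 \<le> n}"
    using has_Z1[of 5 t] t
    by (rule_tac has_sum_reindex_bij_witness[where j="\<lambda>n. (n,n)" and i="fst", THEN iffD1])
       (auto simp: f_def power_Suc2[symmetric] simp del: power_Suc2)
  have "(f has_sum (Z 4 t 1 1 + Z1 5 t)) (PP \<union> {(n,n) | n. 1 \<le> n})"
    by (intro has_sum_Un_disjoint f1 f2) (auto simp: PP_def)
  moreover have "PP \<union> {(n,n) | n. 1 \<le> n} = Sigma {1..} (\<lambda>M. {1..M})"
    by (auto simp: PP_def)
  ultimately have fQ: "(f has_sum (Z 4 t 1 1 + Z1 5 t)) (Sigma {1..} (\<lambda>M. {1..M}))" by simp
  have innerQ: "((\<lambda>k. f (M,k)) has_sum (t^M / real M ^ 4 * H M)) {1..M}" for M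
  proof (rule has_sum_finiteI)
    show "finite {1..M}" by simp
    have "(\<Sum>k=1..M. f (M,k)) = (\<Sum>k=1..M. t^M / real M ^ 4 * (1 / real k))"
      by (intro sum.cong) (auto simp: f_def)
    also have "\<dots> = t^M / real M ^ 4 * (\<Sum>k=1..M. 1 / real k)"
      by (simp add: sum_distrib_left)
    also have "(\<Sum>k=1..M. 1 / real k) = H M"
      unfolding H_def by (simp add: sum.atLeast1_atMost_eq)
    finally show "t^M / real M ^ 4 * H M = (\<Sum>k=1..M. f (M,k))" by simp
  qed
  have A2: "((\<lambda>M. t^M / real M ^ 4 * H M) has_sum (Z 4 t 1 1 + Z1 5 t)) {1..}"
    using has_sum_Sigma'[OF fQ innerQ] .
  have A1': "((\<lambda>M. t^M / real M ^ 4 * H M) has_sum V) {1..}"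
    using A1 by (rule has_sum_cong[THEN iffD1, rotated]) (simp add: power4_eq_xxxx power3_eq_cube)
  from A1' A2 have "V = Z 4 t 1 1 + Z1 5 t" by (rule has_sum_unique)
  thus ?thesis by (simp add: V_def)
qed



lemma sgE: "k \<le> M \<Longrightarrow> (-1::real)^(M-k) = (-1)^M * (-1)^k"
proof -
  assume k: "k \<le> M"
  have "(-1::real)^M = (-1)^(M-k) * (-1)^k" using k by (simp add: power_add[symmetric])
  hence "(-1::real)^M * (-1)^k = (-1)^(M-k) * ((-1)^k * (-1)^k)" by simp
  thus ?thesis using pm_pow_sq[OF pm_m1, of k] by simp
qed

lemma first_pt0:
  fixes k x y c :: real
  assumes "k > 0" "x > 0" "y = k + x"
  shows "c / (k ^ 2 * x * y ^ 2) = c / (y ^ 3 * k ^ 2) + c / (y ^ 4 * k) + 1 * c / (y ^ 4 * x ^ 1)"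
proof -
  have "c / (k ^ 2 * x * y ^ 2) = c * (1/(k^2*x*y^2))" by simp
  also have "1/(k^2*x*y^2) = 1/(y^4*x) + 1/(y^4*k) + 1/(y^3*k^2)" by (rule id_first[OF assms])
  finally show ?thesis by (simp add: distrib_left)
qed

lemma first_pt:
  assumes "1 \<le> n" "n < M"
  shows "(-1::real)^n / (real (M-n) ^ 2 * real n * real M ^ 2) =
     (-1)^n / (real M ^ 3 * real (M-n) ^ 2) + (-1)^n / (real M ^ 4 * real (M-n)) + 1^M * (-1)^n / (real M ^ 4 * real n ^ 1)"
proof -
  have a: "real (M-n) > 0" "real n > 0" "real M = real (M-n) + real n" using assms by auto
  show ?thesis unfolding power_one by (rule first_pt0[OF a])
qed
lemma first_part:
  "((\<lambda>(m::nat, n::nat). (-1) ^ n / (real m ^ 2 * real n * real (m + n) ^ 2))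
     has_sum (Z 3 (-1) 2 (-1) + Z 4 (-1) 1 (-1) + Z 4 1 1 (-1))) ({1..} \<times> {1..})"
proof -
  define g where "g = (\<lambda>(M::nat,n::nat). (-1::real)^n / (real (M-n) ^ 2 * real n * real M ^ 2))"
  have p1: "((\<lambda>(M,n). 1^M * (-1)^n / (real M ^ 4 * real n ^ 1)) has_sum Z 4 1 1 (-1)) PP"
    by (rule has_Z) auto
  have p2: "((\<lambda>(M,n). (-1)^n / (real M ^ 4 * real (M-n))) has_sum Z 4 (-1) 1 (-1)) PP"
    using has_Z[of 4 1 "-1" "-1"]
    by (rule_tac has_sum_reindex_bij_witness[where j="\<lambda>(M,k). (M,M-k)" and i="\<lambda>(M,k). (M,M-k)", THEN iffD1])
       (auto simp: PP_def sgE)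
  have p3: "((\<lambda>(M,n). (-1)^n / (real M ^ 3 * real (M-n) ^ 2)) has_sum Z 3 (-1) 2 (-1)) PP"
    using has_Z[of 3 2 "-1" "-1"]
    by (rule_tac has_sum_reindex_bij_witness[where j="\<lambda>(M,k). (M,M-k)" and i="\<lambda>(M,k). (M,M-k)", THEN iffD1])
       (auto simp: PP_def sgE)
  have "((\<lambda>p. (case p of (M,n) \<Rightarrow> (-1)^n / (real M ^ 3 * real (M-n) ^ 2))
      + (case p of (M,n) \<Rightarrow> (-1)^n / (real M ^ 4 * real (M-n)))
      + (case p of (M,n) \<Rightarrow> 1^M * (-1)^n / (real M ^ 4 * real n ^ 1)))
      has_sum (Z 3 (-1) 2 (-1) + Z 4 (-1) 1 (-1) + Z 4 1 1 (-1))) PP"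
    by (intro has_sum_add p1 p2 p3)
  hence hg: "(g has_sum (Z 3 (-1) 2 (-1) + Z 4 (-1) 1 (-1) + Z 4 1 1 (-1))) PP"
  proof (rule has_sum_cong[THEN iffD1, rotated])
    fix p :: "nat \<times> nat" assume "p \<in> PP"
    then obtain M n where p: "p = (M,n)" "1 \<le> n" "n < M" by (auto simp: PP_def)
    show "(\<lambda>p. (case p of (M,n) \<Rightarrow> (-1)^n / (real M ^ 3 * real (M-n) ^ 2))
      + (case p of (M,n) \<Rightarrow> (-1)^n / (real M ^ 4 * real (M-n)))
      + (case p of (M,n) \<Rightarrow> 1^M * (-1)^n / (real M ^ 4 * real n ^ 1))) p = g p"
      unfolding p prod.case g_def by (rule first_pt[OF p(2,3), symmetric])
  qed
  show ?thesis
    using reindexA[where G="\<lambda>M n. (-1::real)^n / (real (M-n) ^ 2 * real n * real M ^ 2)"] hg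
    by (simp add: g_def)
qed



lemma zeta2: "zeta 2 = pi^2 / 6"
proof -
  have "(\<lambda>n. 1 / real (Suc n) ^ 2) sums (pi^2/6)"
    using inverse_squares_sums by (simp add: add.commute)
  thus ?thesis unfolding zeta_def by (simp add: sums_iff)
qed

lemma second_part:
  "Z 3 (-1) 2 (-1) + Z 4 (-1) 1 (-1) + Z 4 1 1 (-1) = 107 / 32 * zeta 5 - 5 / 16 * pi ^ 2 * zeta 3"
proof -
  have z2: "Z1 2 1 = zeta 2" and z3: "Z1 3 1 = zeta 3" and z5: "Z1 5 1 = zeta 5"
    by (simp_all add: Z1_zeta)
  have m2: "Z1 2 (-1) = - zeta 2 / 2" using Z1_dist[of 2] z2 by simp
  have m3: "Z1 3 (-1) = - 3/4 * zeta 3" using Z1_dist[of 3] z3 by simp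
  have m5: "Z1 5 (-1) = - 15/16 * zeta 5" using Z1_dist[of 5] z5 by simp
  have P1: "Z1 2 1 * Z1 3 1 = zeta 2 * zeta 3" using z2 z3 by simp
  have P2: "Z1 2 1 * Z1 3 (-1) = -3/4 * (zeta 2 * zeta 3)" using z2 m3 by simp
  have P3: "Z1 2 (-1) * Z1 3 1 = -1/2 * (zeta 2 * zeta 3)" using m2 z3 by simp
  have P4: "Z1 2 (-1) * Z1 3 (-1) = 3/8 * (zeta 2 * zeta 3)" using m2 m3 by simp
  have st1: "Z1 2 1 * Z1 3 1 = Z 2 1 3 1 + Z 3 1 2 1 + Z1 5 1" using stuffle[of 2 3 1 1] by simp
  have st2: "Z1 2 1 * Z1 3 (-1) = Z 2 1 3 (-1) + Z 3 (-1) 2 1 + Z1 5 (-1)" using stuffle[of 2 3 1 "-1"] by simp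
  have st3: "Z1 2 (-1) * Z1 3 1 = Z 2 (-1) 3 1 + Z 3 1 2 (-1) + Z1 5 (-1)" using stuffle[of 2 3 "-1" 1] by simp
  have st4: "Z1 2 (-1) * Z1 3 (-1) = Z 2 (-1) 3 (-1) + Z 3 (-1) 2 (-1) + Z1 5 1" using stuffle[of 2 3 "-1" "-1"] by simp
  have sh1: "Z1 2 1 * Z1 3 1 = Z 2 1 3 1 + 2 * Z 3 1 2 1 + 3 * Z 4 1 1 1 + Z 3 1 2 1 + 3 * Z 4 1 1 1"
    using shuffle[of 1 1] by simp
  have sh2: "Z1 2 1 * Z1 3 (-1) = Z 2 1 3 (-1) + 2 * Z 3 1 2 (-1) + 3 * Z 4 1 1 (-1) + Z 3 (-1) 2 (-1) + 3 * Z 4 (-1) 1 (-1)"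
    using shuffle[of 1 "-1"] by simp
  have sh3: "Z1 2 (-1) * Z1 3 1 = Z 2 (-1) 3 (-1) + 2 * Z 3 (-1) 2 (-1) + 3 * Z 4 (-1) 1 (-1) + Z 3 1 2 (-1) + 3 * Z 4 1 1 (-1)"
    using shuffle[of "-1" 1] by simp
  have sh4: "Z1 2 (-1) * Z1 3 (-1) = Z 2 (-1) 3 1 + 2 * Z 3 (-1) 2 1 + 3 * Z 4 (-1) 1 1 + Z 3 (-1) 2 1 + 3 * Z 4 (-1) 1 1"
    using shuffle[of "-1" "-1"] by simp
  have d: "Z 2 1 3 1 + Z 2 1 3 (-1) + Z 2 (-1) 3 1 + Z 2 (-1) 3 (-1) = Z 2 1 3 1 / 8" by (rule dist_pair)
  have r1: "Z 2 1 3 1 + Z 3 1 2 1 + Z 4 1 1 1 + Z 4 1 1 1 = Z 4 1 1 1 + Z1 5 1" using sum_rel[of 1] by simp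
  have r2: "Z 2 1 3 (-1) + Z 3 1 2 (-1) + Z 4 1 1 (-1) + Z 4 (-1) 1 (-1) = Z 4 (-1) 1 1 + Z1 5 (-1)"
    using sum_rel[of "-1"] by simp
  have "Z 3 (-1) 2 (-1) + Z 4 (-1) 1 (-1) + Z 4 1 1 (-1) = 107 / 32 * zeta 5 - 15 / 8 * (zeta 2 * zeta 3)"
    using P1 P2 P3 P4 st1 st2 st3 st4 sh1 sh2 sh3 sh4 d r1 r2 z5 m5 by linarith
  thus ?thesis by (simp add: zeta2)
qed


theorem mainTheorem3:
  shows "((\<lambda>(m::nat, n::nat). (-1) ^ n / (real m ^ 2 * real n * real (m + n) ^ 2))
            has_sum (zeta_bb 3 2 + zeta_bb 4 1 + zeta_nb 4 1)) ({1..} \<times> {1..})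
         \<and> zeta_bb 3 2 + zeta_bb 4 1 + zeta_nb 4 1 = 107 / 32 * zeta 5 - 5 / 16 * pi ^ 2 * zeta 3"
proof -
  have eq: "zeta_bb 3 2 + zeta_bb 4 1 + zeta_nb 4 1 = Z 3 (-1) 2 (-1) + Z 4 (-1) 1 (-1) + Z 4 1 1 (-1)"
    by (simp add: zeta_bb_Z zeta_nb_Z)
  show ?thesis unfolding eq by (intro conjI first_part second_part)
qed

end
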